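(* Let $1 \le k \le 3$ and let $\sigma_k=[v_0,\dots,v_k]$ be a $k$-simplex in Euclidean 3-space whose vertices $v_0,\dots,v_k$ are represented as normalized PGA points in $\mathbb{R}_{3,0,1}$. Then \[ \frac{1}{k!}\,\lVert v_0\vee\cdots\vee v_k\rVert \;=\; \frac{1}{k!}\Big\lVert \sum_{\sigma_{k-1}\in\partial\sigma_k} S(\sigma_{k-1})\Big\rVert_\infty \;=\; \frac{1}{k!}\Big\lVert \sum_{i=0}^{k}(-1)^i\, v_0\vee\cdots\vee \widehat{v_i}\vee\cdots\vee v_k\Big\rVert_\infty , \] where $\widehat{v_i}$ means that $v_i$ is omitted from the join. That is, the $k$-magnitude of $\sigma_k$ (length, area, volume) can be computed from the carriers of the $(k-1)$-dimensional facets of its oriented boundary.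
   Context: $\mathbb{R}_{3,0,1}$ (3D plane-based geometric algebra, PGA) is the Clifford algebra generated by an orthogonal basis $\mathbf e_0,\mathbf e_1,\mathbf e_2,\mathbf e_3$ with $\mathbf e_1^2=\mathbf e_2^2=\mathbf e_3^2=1$ and $\mathbf e_0^2=0$; $\mathbf e_{ij\cdots}$ denotes the geometric product of distinct basis vectors, $\wedge$ is the outer (wedge) product, and $I_3=\mathbf e_{123}$. The Hodge dual $A\mapsto A^*$ is the linear map determined on basis blades $\mathbf e_J$ by $\mathbf e_J\,\mathbf e_J^*=\mathbf e_{0123}$ (with $\mathbf e_J^*$ a multiple of the complementary basis blade); the join is defined by $(A\vee B)^*=A^*\wedge B^*$. Every multivector splits uniquely as $A=A_E+\mathbf e_0A_I$ with $A_E,A_I$ in the subalgebra generated by $\mathbf e_1,\mathbf e_2,\mathbf e_3$. The (Euclidean) norm is $\lVert A\rVert=\lVert A_E\rVert$ and the ideal norm is $\lVert A\rVert_\infty=\lVert A_I\rVert$, where for an element $B$ of the Euclidean subalgebra $\lVert B\rVert$ is the square root of the sum of squares of its coefficients on the basis blades (equivalently $\sqrt{\tilde B B}$ for blades, $\tilde{\ }$ denoting reversion). A normalized point at position $\vec v=x\mathbf e_1+y\mathbf e_2+z\mathbf e_3$ is $v=(\mathbf e_0+\vec v)^*=\mathbf e_{123}-\mathbf e_0\vec v\,\mathbf e_{123}$. For a simplex $\sigma=[v_0,\dots,v_m]$ its carrier is $S(\sigma)=v_0\vee\cdots\vee v_m$. The oriented boundary is $\partial[v_0,\dots,v_k]=\sum_{i=0}^k(-1)^i[v_0,\dots,\widehat{v_i},\dots,v_k]$,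 and the sum over $\partial\sigma_k$ of $S$ is taken with these signs. *)

theory Defs
  imports "HOL-Analysis.Analysis"
begin

text \<open>Multivectors of R(3,0,1): a multivector is given by its coefficients on the
 basis blades e_J, J a subset of {0,1,2,3} (indices in increasing order). Coefficients
 at index sets outside Pow {0..3} are kept zero by all operations below.\<close>

type_synonym mv = "nat set \<Rightarrow> real"

definition blades :: "nat set set" where
  "blades = Pow {0..3}"

text \<open>Sign of reordering e_A e_B (A, B disjoint) into e_(A \<union> B):
 (-1) to the number of inversions.\<close>
definition blade_sign :: "nat set \<Rightarrow> nat set \<Rightarrow> real" where
  "blade_sign A B = (-1) ^ card {(a, b). a \<in> A \<and> b \<in> B \<and> b < a}"

definition wedge :: "mv \<Rightarrow> mv \<Rightarrow> mv" where
  "wedge X Y = (\<lambda>C. if C \<in> blades then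
      (\<Sum>A\<in>Pow C. blade_sign A (C - A) * X A * Y (C - A)) else 0)"

text \<open>Hodge dual: e_J * e_J^* = e_0123, e_J^* a multiple of the complementary blade,
 hence e_J^* = blade_sign J ({0..3} - J) * e_({0..3}-J).\<close>
definition hodge :: "mv \<Rightarrow> mv" where
  "hodge X = (\<lambda>K. if K \<in> blades then
      blade_sign ({0..3} - K) K * X ({0..3} - K) else 0)"

definition unhodge :: "mv \<Rightarrow> mv" where
  "unhodge Y = (\<lambda>J. if J \<in> blades then
      blade_sign J ({0..3} - J) * Y ({0..3} - J) else 0)"

definition join :: "mv \<Rightarrow> mv \<Rightarrow> mv" where
  "join A B = unhodge (wedge (hodge A) (hodge B))"

fun join_list :: "mv list \<Rightarrow> mv" where
  "join_list [] = (\<lambda>_. 0)"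
| "join_list [x] = x"
| "join_list (x # xs) = join x (join_list xs)"

text \<open>Euclidean norm ||A|| = ||A_E|| and ideal norm ||A||_inf = ||A_I||,
 where A = A_E + e_0 A_I, A_E, A_I in the subalgebra generated by e_1,e_2,e_3.\<close>
definition mv_norm :: "mv \<Rightarrow> real" where
  "mv_norm A = sqrt (\<Sum>J\<in>Pow {1..3}. (A J)\<^sup>2)"

definition mv_ideal_norm :: "mv \<Rightarrow> real" where
  "mv_ideal_norm A = sqrt (\<Sum>J\<in>Pow {1..3}. (A (insert 0 J))\<^sup>2)"

definition pos_vec :: "real^3 \<Rightarrow> mv" where
  "pos_vec p = (\<lambda>J. if J = {0} then 1
                    else if J = {1} then p $ 1
                    else if J = {2} then p $ 2
                    else if J = {3} then p $ 3 else 0)"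

definition pga_point :: "real^3 \<Rightarrow> mv" where
  "pga_point p = hodge (pos_vec p)"

definition carrier :: "mv list \<Rightarrow> mv" where
  "carrier \<sigma> = join_list \<sigma>"

definition boundary :: "mv list \<Rightarrow> (real \<times> mv list) list" where
  "boundary \<sigma> = map (\<lambda>i. ((-1) ^ i, take i \<sigma> @ drop (Suc i) \<sigma>)) [0..<length \<sigma>]"

end

theory Submission imports Defs begin

lemma bs: "blade_sign A B = (-1) ^ card (Set.filter (\<lambda>(a,b). b < a) (A \<times> B))"
  unfolding blade_sign_def by (rule arg_cong[where f="\<lambda>n. (-1)^n"], rule arg_cong[where f=card]) auto

lemma U4: "{0..3::nat} = {0,1,2,3}" by auto

lemma sum_Pow_set: "distinct xs \<Longrightarrow> sum f (Pow (set xs)) = sum_list (map (f \<circ> set) (subseqs xs))"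
proof -
  assume d: "distinct xs"
  have "sum f (Pow (set xs)) = sum f (set (map set (subseqs xs)))"
    using subseqs_powset[of xs] by simp
  also have "\<dots> = sum_list (map f (map set (subseqs xs)))"
    by (rule sum_list_distinct_conv_sum_set[symmetric]) (rule distinct_set_subseqs[OF d])
  finally show ?thesis by simp
qed

lemma wedge_sub: "distinct xs \<Longrightarrow> wedge X Y (set xs) = (if set xs \<in> blades then
   sum_list (map (\<lambda>A. blade_sign A (set xs - A) * X A * Y (set xs - A)) (map set (subseqs xs))) else 0)"
  unfolding wedge_def by (simp add: sum_Pow_set comp_def)

lemma sg0 [simp]: "blade_sign {} {} = 1" unfolding bs by code_simp
lemma sg1 [simp]: "blade_sign {} {0} = 1" unfolding bs by code_simp
lemma sg2 [simp]: "blade_sign {0} {} = 1" unfolding bs by code_simp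
lemma sg3 [simp]: "blade_sign {} {Suc 0} = 1" unfolding bs by code_simp
lemma sg4 [simp]: "blade_sign {Suc 0} {} = 1" unfolding bs by code_simp
lemma sg5 [simp]: "blade_sign {} {2} = 1" unfolding bs by code_simp
lemma sg6 [simp]: "blade_sign {2} {} = 1" unfolding bs by code_simp
lemma sg7 [simp]: "blade_sign {} {3} = 1" unfolding bs by code_simp
lemma sg8 [simp]: "blade_sign {3} {} = 1" unfolding bs by code_simp
lemma sg9 [simp]: "blade_sign {} {0,Suc 0} = 1" unfolding bs by code_simp
lemma sg10 [simp]: "blade_sign {0} {Suc 0} = 1" unfolding bs by code_simp
lemma sg11 [simp]: "blade_sign {Suc 0} {0} = -1" unfolding bs by code_simp
lemma sg12 [simp]: "blade_sign {0,Suc 0} {} = 1" unfolding bs by code_simp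
lemma sg13 [simp]: "blade_sign {} {0,2} = 1" unfolding bs by code_simp
lemma sg14 [simp]: "blade_sign {0} {2} = 1" unfolding bs by code_simp
lemma sg15 [simp]: "blade_sign {2} {0} = -1" unfolding bs by code_simp
lemma sg16 [simp]: "blade_sign {0,2} {} = 1" unfolding bs by code_simp
lemma sg17 [simp]: "blade_sign {} {0,3} = 1" unfolding bs by code_simp
lemma sg18 [simp]: "blade_sign {0} {3} = 1" unfolding bs by code_simp
lemma sg19 [simp]: "blade_sign {3} {0} = -1" unfolding bs by code_simp
lemma sg20 [simp]: "blade_sign {0,3} {} = 1" unfolding bs by code_simp
lemma sg21 [simp]: "blade_sign {} {Suc 0,2} = 1" unfolding bs by code_simp
lemma sg22 [simp]: "blade_sign {Suc 0} {2} = 1" unfolding bs by code_simp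
lemma sg23 [simp]: "blade_sign {2} {Suc 0} = -1" unfolding bs by code_simp
lemma sg24 [simp]: "blade_sign {Suc 0,2} {} = 1" unfolding bs by code_simp
lemma sg25 [simp]: "blade_sign {} {Suc 0,3} = 1" unfolding bs by code_simp
lemma sg26 [simp]: "blade_sign {Suc 0} {3} = 1" unfolding bs by code_simp
lemma sg27 [simp]: "blade_sign {3} {Suc 0} = -1" unfolding bs by code_simp
lemma sg28 [simp]: "blade_sign {Suc 0,3} {} = 1" unfolding bs by code_simp
lemma sg29 [simp]: "blade_sign {} {2,3} = 1" unfolding bs by code_simp
lemma sg30 [simp]: "blade_sign {2} {3} = 1" unfolding bs by code_simp
lemma sg31 [simp]: "blade_sign {3} {2} = -1" unfolding bs by code_simp
lemma sg32 [simp]: "blade_sign {2,3} {} = 1" unfolding bs by code_simp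
lemma sg33 [simp]: "blade_sign {} {0,Suc 0,2} = 1" unfolding bs by code_simp
lemma sg34 [simp]: "blade_sign {0} {Suc 0,2} = 1" unfolding bs by code_simp
lemma sg35 [simp]: "blade_sign {Suc 0} {0,2} = -1" unfolding bs by code_simp
lemma sg36 [simp]: "blade_sign {2} {0,Suc 0} = 1" unfolding bs by code_simp
lemma sg37 [simp]: "blade_sign {0,Suc 0} {2} = 1" unfolding bs by code_simp
lemma sg38 [simp]: "blade_sign {0,2} {Suc 0} = -1" unfolding bs by code_simp
lemma sg39 [simp]: "blade_sign {Suc 0,2} {0} = 1" unfolding bs by code_simp
lemma sg40 [simp]: "blade_sign {0,Suc 0,2} {} = 1" unfolding bs by code_simp
lemma sg41 [simp]: "blade_sign {} {0,Suc 0,3} = 1" unfolding bs by code_simp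
lemma sg42 [simp]: "blade_sign {0} {Suc 0,3} = 1" unfolding bs by code_simp
lemma sg43 [simp]: "blade_sign {Suc 0} {0,3} = -1" unfolding bs by code_simp
lemma sg44 [simp]: "blade_sign {3} {0,Suc 0} = 1" unfolding bs by code_simp
lemma sg45 [simp]: "blade_sign {0,Suc 0} {3} = 1" unfolding bs by code_simp
lemma sg46 [simp]: "blade_sign {0,3} {Suc 0} = -1" unfolding bs by code_simp
lemma sg47 [simp]: "blade_sign {Suc 0,3} {0} = 1" unfolding bs by code_simp
lemma sg48 [simp]: "blade_sign {0,Suc 0,3} {} = 1" unfolding bs by code_simp
lemma sg49 [simp]: "blade_sign {} {0,2,3} = 1" unfolding bs by code_simp
lemma sg50 [simp]: "blade_sign {0} {2,3} = 1" unfolding bs by code_simp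
lemma sg51 [simp]: "blade_sign {2} {0,3} = -1" unfolding bs by code_simp
lemma sg52 [simp]: "blade_sign {3} {0,2} = 1" unfolding bs by code_simp
lemma sg53 [simp]: "blade_sign {0,2} {3} = 1" unfolding bs by code_simp
lemma sg54 [simp]: "blade_sign {0,3} {2} = -1" unfolding bs by code_simp
lemma sg55 [simp]: "blade_sign {2,3} {0} = 1" unfolding bs by code_simp
lemma sg56 [simp]: "blade_sign {0,2,3} {} = 1" unfolding bs by code_simp
lemma sg57 [simp]: "blade_sign {} {Suc 0,2,3} = 1" unfolding bs by code_simp
lemma sg58 [simp]: "blade_sign {Suc 0} {2,3} = 1" unfolding bs by code_simp
lemma sg59 [simp]: "blade_sign {2} {Suc 0,3} = -1" unfolding bs by code_simp
lemma sg60 [simp]: "blade_sign {3} {Suc 0,2} = 1" unfolding bs by code_simp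
lemma sg61 [simp]: "blade_sign {Suc 0,2} {3} = 1" unfolding bs by code_simp
lemma sg62 [simp]: "blade_sign {Suc 0,3} {2} = -1" unfolding bs by code_simp
lemma sg63 [simp]: "blade_sign {2,3} {Suc 0} = 1" unfolding bs by code_simp
lemma sg64 [simp]: "blade_sign {Suc 0,2,3} {} = 1" unfolding bs by code_simp
lemma sg65 [simp]: "blade_sign {} {0,Suc 0,2,3} = 1" unfolding bs by code_simp
lemma sg66 [simp]: "blade_sign {0} {Suc 0,2,3} = 1" unfolding bs by code_simp
lemma sg67 [simp]: "blade_sign {Suc 0} {0,2,3} = -1" unfolding bs by code_simp
lemma sg68 [simp]: "blade_sign {2} {0,Suc 0,3} = 1" unfolding bs by code_simp
lemma sg69 [simp]: "blade_sign {3} {0,Suc 0,2} = -1" unfolding bs by code_simp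
lemma sg70 [simp]: "blade_sign {0,Suc 0} {2,3} = 1" unfolding bs by code_simp
lemma sg71 [simp]: "blade_sign {0,2} {Suc 0,3} = -1" unfolding bs by code_simp
lemma sg72 [simp]: "blade_sign {0,3} {Suc 0,2} = 1" unfolding bs by code_simp
lemma sg73 [simp]: "blade_sign {Suc 0,2} {0,3} = 1" unfolding bs by code_simp
lemma sg74 [simp]: "blade_sign {Suc 0,3} {0,2} = -1" unfolding bs by code_simp
lemma sg75 [simp]: "blade_sign {2,3} {0,Suc 0} = 1" unfolding bs by code_simp
lemma sg76 [simp]: "blade_sign {0,Suc 0,2} {3} = 1" unfolding bs by code_simp
lemma sg77 [simp]: "blade_sign {0,Suc 0,3} {2} = -1" unfolding bs by code_simp
lemma sg78 [simp]: "blade_sign {0,2,3} {Suc 0} = 1" unfolding bs by code_simp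
lemma sg79 [simp]: "blade_sign {Suc 0,2,3} {0} = -1" unfolding bs by code_simp
lemma sg80 [simp]: "blade_sign {0,Suc 0,2,3} {} = 1" unfolding bs by code_simp
lemma hodge_at81: "hodge X {} = X {0,Suc 0,2,3}" unfolding hodge_def blades_def U4 by (simp add: insert_Diff_if)
lemma unhodge_at82: "unhodge X {} = X {0,Suc 0,2,3}" unfolding unhodge_def blades_def U4 by (simp add: insert_Diff_if)
lemma hodge_at83: "hodge X {0} = - X {Suc 0,2,3}" unfolding hodge_def blades_def U4 by (simp add: insert_Diff_if)
lemma unhodge_at84: "unhodge X {0} = X {Suc 0,2,3}" unfolding unhodge_def blades_def U4 by (simp add: insert_Diff_if)
lemma hodge_at85: "hodge X {Suc 0} = X {0,2,3}" unfolding hodge_def blades_def U4 by (simp add: insert_Diff_if)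
lemma unhodge_at86: "unhodge X {Suc 0} = - X {0,2,3}" unfolding unhodge_def blades_def U4 by (simp add: insert_Diff_if)
lemma hodge_at87: "hodge X {2} = - X {0,Suc 0,3}" unfolding hodge_def blades_def U4 by (simp add: insert_Diff_if)
lemma unhodge_at88: "unhodge X {2} = X {0,Suc 0,3}" unfolding unhodge_def blades_def U4 by (simp add: insert_Diff_if)
lemma hodge_at89: "hodge X {3} = X {0,Suc 0,2}" unfolding hodge_def blades_def U4 by (simp add: insert_Diff_if)
lemma unhodge_at90: "unhodge X {3} = - X {0,Suc 0,2}" unfolding unhodge_def blades_def U4 by (simp add: insert_Diff_if)
lemma hodge_at91: "hodge X {0,Suc 0} = X {2,3}" unfolding hodge_def blades_def U4 by (simp add: insert_Diff_if)
lemma unhodge_at92: "unhodge X {0,Suc 0} = X {2,3}" unfolding unhodge_def blades_def U4 by (simp add: insert_Diff_if)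
lemma hodge_at93: "hodge X {0,2} = - X {Suc 0,3}" unfolding hodge_def blades_def U4 by (simp add: insert_Diff_if)
lemma unhodge_at94: "unhodge X {0,2} = - X {Suc 0,3}" unfolding unhodge_def blades_def U4 by (simp add: insert_Diff_if)
lemma hodge_at95: "hodge X {0,3} = X {Suc 0,2}" unfolding hodge_def blades_def U4 by (simp add: insert_Diff_if)
lemma unhodge_at96: "unhodge X {0,3} = X {Suc 0,2}" unfolding unhodge_def blades_def U4 by (simp add: insert_Diff_if)
lemma hodge_at97: "hodge X {Suc 0,2} = X {0,3}" unfolding hodge_def blades_def U4 by (simp add: insert_Diff_if)
lemma unhodge_at98: "unhodge X {Suc 0,2} = X {0,3}" unfolding unhodge_def blades_def U4 by (simp add: insert_Diff_if)
lemma hodge_at99: "hodge X {Suc 0,3} = - X {0,2}" unfolding hodge_def blades_def U4 by (simp add: insert_Diff_if)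
lemma unhodge_at100: "unhodge X {Suc 0,3} = - X {0,2}" unfolding unhodge_def blades_def U4 by (simp add: insert_Diff_if)
lemma hodge_at101: "hodge X {2,3} = X {0,Suc 0}" unfolding hodge_def blades_def U4 by (simp add: insert_Diff_if)
lemma unhodge_at102: "unhodge X {2,3} = X {0,Suc 0}" unfolding unhodge_def blades_def U4 by (simp add: insert_Diff_if)
lemma hodge_at103: "hodge X {0,Suc 0,2} = - X {3}" unfolding hodge_def blades_def U4 by (simp add: insert_Diff_if)
lemma unhodge_at104: "unhodge X {0,Suc 0,2} = X {3}" unfolding unhodge_def blades_def U4 by (simp add: insert_Diff_if)
lemma hodge_at105: "hodge X {0,Suc 0,3} = X {2}" unfolding hodge_def blades_def U4 by (simp add: insert_Diff_if)
lemma unhodge_at106: "unhodge X {0,Suc 0,3} = - X {2}" unfolding unhodge_def blades_def U4 by (simp add: insert_Diff_if)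
lemma hodge_at107: "hodge X {0,2,3} = - X {Suc 0}" unfolding hodge_def blades_def U4 by (simp add: insert_Diff_if)
lemma unhodge_at108: "unhodge X {0,2,3} = X {Suc 0}" unfolding unhodge_def blades_def U4 by (simp add: insert_Diff_if)
lemma hodge_at109: "hodge X {Suc 0,2,3} = X {0}" unfolding hodge_def blades_def U4 by (simp add: insert_Diff_if)
lemma unhodge_at110: "unhodge X {Suc 0,2,3} = - X {0}" unfolding unhodge_def blades_def U4 by (simp add: insert_Diff_if)
lemma hodge_at111: "hodge X {0,Suc 0,2,3} = X {}" unfolding hodge_def blades_def U4 by (simp add: insert_Diff_if)
lemma unhodge_at112: "unhodge X {0,Suc 0,2,3} = X {}" unfolding unhodge_def blades_def U4 by (simp add: insert_Diff_if)
lemma wedge_at113: "wedge X Y {} = X {} * Y {}"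
  using wedge_sub[of "[]" X Y] by (simp add: blades_def insert_Diff_if)
lemma wedge_at114: "wedge X Y {0} = X {} * Y {0} + X {0} * Y {}"
  using wedge_sub[of "[0]" X Y] by (simp add: blades_def insert_Diff_if)
lemma wedge_at115: "wedge X Y {Suc 0} = X {} * Y {Suc 0} + X {Suc 0} * Y {}"
  using wedge_sub[of "[1]" X Y] by (simp add: blades_def insert_Diff_if)
lemma wedge_at116: "wedge X Y {2} = X {} * Y {2} + X {2} * Y {}"
  using wedge_sub[of "[2]" X Y] by (simp add: blades_def insert_Diff_if)
lemma wedge_at117: "wedge X Y {3} = X {} * Y {3} + X {3} * Y {}"
  using wedge_sub[of "[3]" X Y] by (simp add: blades_def insert_Diff_if)
lemma wedge_at118: "wedge X Y {0,Suc 0} = X {} * Y {0,Suc 0} + X {0} * Y {Suc 0} - X {Suc 0} * Y {0} + X {0,Suc 0} * Y {}"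
  using wedge_sub[of "[0,1]" X Y] by (simp add: blades_def insert_Diff_if)
lemma wedge_at119: "wedge X Y {0,2} = X {} * Y {0,2} + X {0} * Y {2} - X {2} * Y {0} + X {0,2} * Y {}"
  using wedge_sub[of "[0,2]" X Y] by (simp add: blades_def insert_Diff_if)
lemma wedge_at120: "wedge X Y {0,3} = X {} * Y {0,3} + X {0} * Y {3} - X {3} * Y {0} + X {0,3} * Y {}"
  using wedge_sub[of "[0,3]" X Y] by (simp add: blades_def insert_Diff_if)
lemma wedge_at121: "wedge X Y {Suc 0,2} = X {} * Y {Suc 0,2} + X {Suc 0} * Y {2} - X {2} * Y {Suc 0} + X {Suc 0,2} * Y {}"
  using wedge_sub[of "[1,2]" X Y] by (simp add: blades_def insert_Diff_if)
lemma wedge_at122: "wedge X Y {Suc 0,3} = X {} * Y {Suc 0,3} + X {Suc 0} * Y {3} - X {3} * Y {Suc 0} + X {Suc 0,3} * Y {}"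
  using wedge_sub[of "[1,3]" X Y] by (simp add: blades_def insert_Diff_if)
lemma wedge_at123: "wedge X Y {2,3} = X {} * Y {2,3} + X {2} * Y {3} - X {3} * Y {2} + X {2,3} * Y {}"
  using wedge_sub[of "[2,3]" X Y] by (simp add: blades_def insert_Diff_if)
lemma wedge_at124: "wedge X Y {0,Suc 0,2} = X {} * Y {0,Suc 0,2} + X {0} * Y {Suc 0,2} - X {Suc 0} * Y {0,2} + X {2} * Y {0,Suc 0} + X {0,Suc 0} * Y {2} - X {0,2} * Y {Suc 0} + X {Suc 0,2} * Y {0} + X {0,Suc 0,2} * Y {}"
  using wedge_sub[of "[0,1,2]" X Y] by (simp add: blades_def insert_Diff_if)
lemma wedge_at125: "wedge X Y {0,Suc 0,3} = X {} * Y {0,Suc 0,3} + X {0} * Y {Suc 0,3} - X {Suc 0} * Y {0,3} + X {3} * Y {0,Suc 0} + X {0,Suc 0} * Y {3} - X {0,3} * Y {Suc 0} + X {Suc 0,3} * Y {0} + X {0,Suc 0,3} * Y {}"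
  using wedge_sub[of "[0,1,3]" X Y] by (simp add: blades_def insert_Diff_if)
lemma wedge_at126: "wedge X Y {0,2,3} = X {} * Y {0,2,3} + X {0} * Y {2,3} - X {2} * Y {0,3} + X {3} * Y {0,2} + X {0,2} * Y {3} - X {0,3} * Y {2} + X {2,3} * Y {0} + X {0,2,3} * Y {}"
  using wedge_sub[of "[0,2,3]" X Y] by (simp add: blades_def insert_Diff_if)
lemma wedge_at127: "wedge X Y {Suc 0,2,3} = X {} * Y {Suc 0,2,3} + X {Suc 0} * Y {2,3} - X {2} * Y {Suc 0,3} + X {3} * Y {Suc 0,2} + X {Suc 0,2} * Y {3} - X {Suc 0,3} * Y {2} + X {2,3} * Y {Suc 0} + X {Suc 0,2,3} * Y {}"
  using wedge_sub[of "[1,2,3]" X Y] by (simp add: blades_def insert_Diff_if)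
lemma wedge_at128: "wedge X Y {0,Suc 0,2,3} = X {} * Y {0,Suc 0,2,3} + X {0} * Y {Suc 0,2,3} - X {Suc 0} * Y {0,2,3} + X {2} * Y {0,Suc 0,3} - X {3} * Y {0,Suc 0,2} + X {0,Suc 0} * Y {2,3} - X {0,2} * Y {Suc 0,3} + X {0,3} * Y {Suc 0,2} + X {Suc 0,2} * Y {0,3} - X {Suc 0,3} * Y {0,2} + X {2,3} * Y {0,Suc 0} + X {0,Suc 0,2} * Y {3} - X {0,Suc 0,3} * Y {2} + X {0,2,3} * Y {Suc 0} - X {Suc 0,2,3} * Y {0} + X {0,Suc 0,2,3} * Y {}"
  using wedge_sub[of "[0,1,2,3]" X Y] by (simp add: blades_def insert_Diff_if)
lemmas hodge_ats = hodge_at81 hodge_at83 hodge_at85 hodge_at87 hodge_at89 hodge_at91 hodge_at93 hodge_at95 hodge_at97 hodge_at99 hodge_at101 hodge_at103 hodge_at105 hodge_at107 hodge_at109 hodge_at111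
lemmas unhodge_ats = unhodge_at82 unhodge_at84 unhodge_at86 unhodge_at88 unhodge_at90 unhodge_at92 unhodge_at94 unhodge_at96 unhodge_at98 unhodge_at100 unhodge_at102 unhodge_at104 unhodge_at106 unhodge_at108 unhodge_at110 unhodge_at112
lemmas wedge_ats = wedge_at113 wedge_at114 wedge_at115 wedge_at116 wedge_at117 wedge_at118 wedge_at119 wedge_at120 wedge_at121 wedge_at122 wedge_at123 wedge_at124 wedge_at125 wedge_at126 wedge_at127 wedge_at128
lemma pga_at0: "pga_point p {} = 0" unfolding pga_point_def hodge_def blades_def U4 pos_vec_def by (simp add: insert_Diff_if)
lemma pga_at1: "pga_point p {0} = 0" unfolding pga_point_def hodge_def blades_def U4 pos_vec_def by (simp add: insert_Diff_if)
lemma pga_at2: "pga_point p {Suc 0} = 0" unfolding pga_point_def hodge_def blades_def U4 pos_vec_def by (simp add: insert_Diff_if)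
lemma pga_at3: "pga_point p {2} = 0" unfolding pga_point_def hodge_def blades_def U4 pos_vec_def by (simp add: insert_Diff_if)
lemma pga_at4: "pga_point p {3} = 0" unfolding pga_point_def hodge_def blades_def U4 pos_vec_def by (simp add: insert_Diff_if)
lemma pga_at5: "pga_point p {0,Suc 0} = 0" unfolding pga_point_def hodge_def blades_def U4 pos_vec_def by (simp add: insert_Diff_if)
lemma pga_at6: "pga_point p {0,2} = 0" unfolding pga_point_def hodge_def blades_def U4 pos_vec_def by (simp add: insert_Diff_if)
lemma pga_at7: "pga_point p {0,3} = 0" unfolding pga_point_def hodge_def blades_def U4 pos_vec_def by (simp add: insert_Diff_if)
lemma pga_at8: "pga_point p {Suc 0,2} = 0" unfolding pga_point_def hodge_def blades_def U4 pos_vec_def by (simp add: insert_Diff_if)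
lemma pga_at9: "pga_point p {Suc 0,3} = 0" unfolding pga_point_def hodge_def blades_def U4 pos_vec_def by (simp add: insert_Diff_if)
lemma pga_at10: "pga_point p {2,3} = 0" unfolding pga_point_def hodge_def blades_def U4 pos_vec_def by (simp add: insert_Diff_if)
lemma pga_at11: "pga_point p {0,Suc 0,2} = - p $ 3" unfolding pga_point_def hodge_def blades_def U4 pos_vec_def by (simp add: insert_Diff_if)
lemma pga_at12: "pga_point p {0,Suc 0,3} = p $ 2" unfolding pga_point_def hodge_def blades_def U4 pos_vec_def by (simp add: insert_Diff_if)
lemma pga_at13: "pga_point p {0,2,3} = - p $ 1" unfolding pga_point_def hodge_def blades_def U4 pos_vec_def by (simp add: insert_Diff_if)
lemma pga_at14: "pga_point p {Suc 0,2,3} = 1" unfolding pga_point_def hodge_def blades_def U4 pos_vec_def by (simp add: insert_Diff_if)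
lemma pga_at15: "pga_point p {0,Suc 0,2,3} = 0" unfolding pga_point_def hodge_def blades_def U4 pos_vec_def by (simp add: insert_Diff_if)
lemmas pga_ats = pga_at0 pga_at1 pga_at2 pga_at3 pga_at4 pga_at5 pga_at6 pga_at7 pga_at8 pga_at9 pga_at10 pga_at11 pga_at12 pga_at13 pga_at14 pga_at15
lemma P123: "sum f (Pow {1..3::nat}) = f {} + f {Suc 0} + f {2} + f {3} + f {Suc 0,2} + f {Suc 0,3} + f {2,3} + f {Suc 0,2,3}"
proof -
  have e: "{1..3::nat} = set [1,2,3]" by auto
  show ?thesis unfolding e by (subst sum_Pow_set) (simp_all add: add_ac)
qed

theorem theorem1:
  fixes k :: nat and p :: "nat \<Rightarrow> real^3"
  assumes "1 \<le> k" and "k \<le> 3"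
  defines "\<sigma> \<equiv> map (\<lambda>i. pga_point (p i)) [0..<Suc k]"
  shows "mv_norm (join_list \<sigma>) / fact k
           = mv_ideal_norm (\<lambda>J. sum_list (map (\<lambda>(s, \<tau>). s * carrier \<tau> J) (boundary \<sigma>))) / fact k
       \<and> mv_ideal_norm (\<lambda>J. sum_list (map (\<lambda>(s, \<tau>). s * carrier \<tau> J) (boundary \<sigma>))) / fact k
           = mv_ideal_norm (\<lambda>J. \<Sum>i\<le>k. (-1) ^ i *
                 join_list (map (\<lambda>j. pga_point (p j)) (filter (\<lambda>j. j \<noteq> i) [0..<Suc k])) J) / fact k"
proof -
  from assms(1,2) have "k = 1 \<or> k = 2 \<or> k = 3" by auto
  then show ?thesis
  proof (elim disjE)
    assume k: "k = 1"
    show ?thesis unfolding \<sigma>_def k mv_norm_def mv_ideal_norm_def P123 carrier_def boundary_def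
      by (simp add: join_def pga_ats wedge_ats hodge_ats unhodge_ats) algebra
  next
    assume "k = 2" then have k: "k = Suc (Suc 0)" by simp
    show ?thesis unfolding \<sigma>_def k mv_norm_def mv_ideal_norm_def P123 carrier_def boundary_def
      apply (simp add: join_def pga_ats wedge_ats hodge_ats unhodge_ats)
      by algebra
  next
    assume "k = 3" then have k: "k = Suc (Suc (Suc 0))" by simp
    show ?thesis unfolding \<sigma>_def k mv_norm_def mv_ideal_norm_def P123 carrier_def boundary_def
      apply (simp add: join_def pga_ats wedge_ats hodge_ats unhodge_ats)
      apply ((intro conjI)?)
      apply ((rule arg_cong[where f=abs], algebra) | (subst abs_minus_cancel[symmetric], rule arg_cong[where f=abs], algebra))+
      done
  qed
qed

end
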